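(* Let $\pi\in\mathsf{G}_{r,n}$ and $b=\text{B-code}(\pi)$. Then for each $1\le t\le r-1$: (1) $\mathsf{Cyc}^0(\pi)=\mathsf{Max}^0(b)$ and $\mathsf{Cyc}^t(\pi)=\mathsf{Max}^{r-t}(b)$; (2) $\mathsf{Lmic}^0(\pi)=\mathsf{Min}^0(b)$ and $\mathsf{Lmic}^t(\pi)=\mathsf{Min}^{r-t}(b)$; (3) $\mathsf{Lmap}^0(\pi)=\mathsf{Rmil}^0(b)$ and $\mathsf{Lmap}^t(\pi)=\mathsf{Rmil}^{r-t}(b)$; (4) $\mathsf{Lmal}^0(\pi)=\mathsf{Rmip}^0(b)$ and $\mathsf{Lmal}^t(\pi)=\mathsf{Rmip}^{r-t}(b)$.
   Context: $\mathsf{G}_{r,n}=C_r\wr\mathfrak S_n$: words $\pi=\sigma_1^{[z_1]}\cdots\sigma_n^{[z_n]}$, $\sigma\in\mathfrak S_n$, colors $z_i\in\mathbb Z/r$ (represented in $\{0,\dots,r-1\}$). $\pi$ acts on $\Sigma=\{i^{[t]}:i\in[n],t\in\mathbb Z/r\}$ by $\pi(i^{[t]})=\sigma_i^{[z_i+t]}$; $i^{[0]}$ is written $i$. For $1\le i<j$, right multiplication of a word $\tau_1^{[y_1]}\cdots\tau_j^{[y_j]}$ by $(i^{[t]}\,j)$ replaces the letter in position $j$ by $\tau_i^{[y_i+t]}$ and the letter in position $i$ by $\tau_j^{[y_j-t]}$. B-code: $\pi^{(n)}=\pi$; for $j=n,\dots,1$, $c_j$ = position in $\pi^{(j)}$ of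 the letter with base value $j$, $z$ its color, $e_j\equiv -z\pmod r$ in $\{0,\dots,r-1\}$; $\pi^{(j-1)}$ = first $j-1$ letters of $\pi^{(j)}\cdot(c_j^{[e_j]}\,j)$ if $c_j<j$, of $\pi^{(j)}$ if $c_j=j$. $\text{B-code}(\pi)=(c_1^{[e_1]},\dots,c_n^{[e_n]})$. Statistics of $\pi$: $\mathsf{Lmal}(\pi)=\{\sigma_i^{[z_i]}:\sigma_i>\sigma_j\ \forall j<i\}$; $\mathsf{Lmap}(\pi)=\{i^{[z_i]}:\sigma_i>\sigma_j\ \forall j<i\}$; for a word $w_1\cdots w_m$ of colored letters, $\mathsf{Lmil}(w)$ is the set of $w_k$ whose base value is smaller than the base values of all $w_{k'}$, $k'<k$. $\mathsf{Cyc}(\pi)$: for each cycle of $\sigma$ with element set $B$, take $\alpha=\min B$ and $c\equiv\sum_{k\in B}z_k\pmod r$; $\mathsf{Cyc}(\pi)$ is the set of all such $\alpha^{[c]}$. $\mathsf{Lmic}(\pi)=\mathsf{Lmil}(\pi(1)\,\pi^2(1)\cdots\pi^m(1))$ where $m\ge1$ is least with $\pi^m(1)=1$. Statistics of $b=(c_1^{[e_1]},\dots,c_n^{[e_n]})$: $\mathsf{Max}(b)=\{i^{[e_i]}:c_i=i\}$, $\mathsf{Min}(b)=\{i^{[e_i]}:c_i=1\}$, $\mathsf{Rmil}(b)=\{c_i^{[e_i]}:c_i<c_j\ \forall j>i\}$, $\mathsf{Rmip}(b)=\{i^{[e_i]}:c_i<c_j\ \forall j>i\}$. For a set $S$ of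 colored letters, $S^t=\{k:k^{[t]}\in S\}$. *)

theory Defs
  imports Main
begin

text \<open>A colored letter i^[t] is the pair (i, t) with t represented in {0..r-1}.
  An element of G_{r,n} is its window word sigma_1^[z_1] ... sigma_n^[z_n],
  a list of colored letters (positions are 1-based in the paper, 0-based in lists).\<close>

type_synonym cletter = "nat \<times> nat"

definition in_G :: "nat \<Rightarrow> nat \<Rightarrow> cletter list \<Rightarrow> bool" where
  "in_G r n w \<longleftrightarrow> length w = n \<and> distinct (map fst w) \<and> set (map fst w) = {1..n}
     \<and> (\<forall>x\<in>set w. snd x < r)"

text \<open>Right multiplication of a word by (i^[t] j), 1 <= i < j <= length w (1-based).\<close>
definition rmul :: "nat \<Rightarrow> cletter list \<Rightarrow> nat \<Rightarrow> nat \<Rightarrow> nat \<Rightarrow> cletter list" where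
  "rmul r w i t j =
     (w[j - 1 := (fst (w ! (i - 1)), (snd (w ! (i - 1)) + t) mod r)])
       [i - 1 := (fst (w ! (j - 1)), (snd (w ! (j - 1)) + (r - t mod r)) mod r)]"

definition pos_of :: "cletter list \<Rightarrow> nat \<Rightarrow> nat" where
  "pos_of w j = Suc (LEAST k. k < length w \<and> fst (w ! k) = j)"

text \<open>B-code: bcode_aux r j w processes pi^(j) = w (of length j) and returns
  (c_1^[e_1], ..., c_j^[e_j]) as the list of pairs (c_i, e_i).\<close>
primrec bcode_aux :: "nat \<Rightarrow> nat \<Rightarrow> cletter list \<Rightarrow> cletter list" where
  "bcode_aux r 0 w = []"
| "bcode_aux r (Suc j) w =
     (let c = pos_of w (Suc j);
          z = snd (w ! (c - 1));
          e = (r - z mod r) mod r;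
          w' = (if c < Suc j then take j (rmul r w c e (Suc j)) else take j w)
      in bcode_aux r j w' @ [(c, e)])"

definition bcode :: "nat \<Rightarrow> cletter list \<Rightarrow> cletter list" where
  "bcode r w = bcode_aux r (length w) w"

definition sig :: "cletter list \<Rightarrow> nat \<Rightarrow> nat" where
  "sig w i = fst (w ! (i - 1))"

definition col :: "cletter list \<Rightarrow> nat \<Rightarrow> nat" where
  "col w i = snd (w ! (i - 1))"

definition Lmal :: "cletter list \<Rightarrow> cletter set" where
  "Lmal w = {w ! (i - 1) | i. i \<in> {1..length w} \<and> (\<forall>j. 1 \<le> j \<and> j < i \<longrightarrow> sig w i > sig w j)}"

definition Lmap :: "cletter list \<Rightarrow> cletter set" where
  "Lmap w = {(i, col w i) | i. i \<in> {1..length w} \<and> (\<forall>j. 1 \<le> j \<and> j < i \<longrightarrow> sig w i > sig w j)}"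

definition Lmil :: "cletter list \<Rightarrow> cletter set" where
  "Lmil u = {u ! k | k. k < length u \<and> (\<forall>k'<k. fst (u ! k) < fst (u ! k'))}"

definition cycle_of :: "cletter list \<Rightarrow> nat \<Rightarrow> nat set" where
  "cycle_of w i = {(sig w ^^ k) i | k. True}"

definition Cyc :: "nat \<Rightarrow> cletter list \<Rightarrow> cletter set" where
  "Cyc r w = {(Min (cycle_of w i), (\<Sum>k\<in>cycle_of w i. col w k) mod r) | i. i \<in> {1..length w}}"

definition act :: "nat \<Rightarrow> cletter list \<Rightarrow> cletter \<Rightarrow> cletter" where
  "act r w x = (sig w (fst x), (col w (fst x) + snd x) mod r)"

definition Lmic :: "nat \<Rightarrow> cletter list \<Rightarrow> cletter set" where
  "Lmic r w = (let m = (LEAST m. m \<ge> 1 \<and> (act r w ^^ m) (1, 0) = (1, 0))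
               in Lmil (map (\<lambda>k. (act r w ^^ k) (1, 0)) [1..<Suc m]))"

definition Maxb :: "cletter list \<Rightarrow> cletter set" where
  "Maxb b = {(i, snd (b ! (i - 1))) | i. i \<in> {1..length b} \<and> fst (b ! (i - 1)) = i}"

definition Minb :: "cletter list \<Rightarrow> cletter set" where
  "Minb b = {(i, snd (b ! (i - 1))) | i. i \<in> {1..length b} \<and> fst (b ! (i - 1)) = 1}"

definition Rmil :: "cletter list \<Rightarrow> cletter set" where
  "Rmil b = {b ! (i - 1) | i. i \<in> {1..length b} \<and>
     (\<forall>j. i < j \<and> j \<le> length b \<longrightarrow> fst (b ! (i - 1)) < fst (b ! (j - 1)))}"

definition Rmip :: "cletter list \<Rightarrow> cletter set" where
  "Rmip b = {(i, snd (b ! (i - 1))) | i. i \<in> {1..length b} \<and>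
     (\<forall>j. i < j \<and> j \<le> length b \<longrightarrow> fst (b ! (i - 1)) < fst (b ! (j - 1)))}"

definition colpart :: "cletter set \<Rightarrow> nat \<Rightarrow> nat set" where
  "colpart S t = {k. (k, t) \<in> S}"

end

theory Submission
  imports Defs
begin


lemma in_G_facts:
  assumes "in_G r n w"
  shows "length w = n" "\<And>i. i \<in> {1..n} \<Longrightarrow> sig w i \<in> {1..n}"
    "\<And>i. i \<in> {1..n} \<Longrightarrow> col w i < r" "inj_on (sig w) {1..n}"
proof -
  show "length w = n" using assms by (simp add: in_G_def)
  show "\<And>i. i \<in> {1..n} \<Longrightarrow> sig w i \<in> {1..n}"
  proof -
    fix i assume "i \<in> {1..n}"
    hence "w ! (i-1) \<in> set w" using assms by (auto simp: in_G_def)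
    hence "fst (w ! (i-1)) \<in> set (map fst w)" by auto
    thus "sig w i \<in> {1..n}" using assms by (simp add: in_G_def sig_def)
  qed
  show "\<And>i. i \<in> {1..n} \<Longrightarrow> col w i < r"
  proof -
    fix i assume "i \<in> {1..n}"
    hence "w ! (i-1) \<in> set w" using assms by (auto simp: in_G_def)
    thus "col w i < r" using assms by (auto simp add: in_G_def col_def)
  qed
  show "inj_on (sig w) {1..n}"
  proof
    fix i j assume "i \<in> {1..n}" "j \<in> {1..n}" "sig w i = sig w j"
    then have "(map fst w) ! (i-1) = (map fst w) ! (j-1)" using assms
      by (auto simp: in_G_def sig_def)
    moreover have "distinct (map fst w)" using assms by (simp add: in_G_def)
    moreover have "i - 1 < length (map fst w)" "j - 1 < length (map fst w)"
      using \<open>i \<in> {1..n}\<close> \<open>j \<in> {1..n}\<close> assms by (auto simp: in_G_def)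
    ultimately have "i - 1 = j - 1" using nth_eq_iff_index_eq by blast
    thus "i = j" using \<open>i \<in> {1..n}\<close> \<open>j \<in> {1..n}\<close> by auto
  qed
qed

lemma in_G_intro:
  assumes "length w = n" "\<And>i. i \<in> {1..n} \<Longrightarrow> sig w i \<in> {1..n}"
    "\<And>i. i \<in> {1..n} \<Longrightarrow> col w i < r" "inj_on (sig w) {1..n}"
  shows "in_G r n w"
proof -
  have d: "distinct (map fst w)"
    unfolding distinct_conv_nth
  proof (intro allI impI)
    fix i j assume "i < length (map fst w)" "j < length (map fst w)" "i \<noteq> j"
    hence "Suc i \<in> {1..n}" "Suc j \<in> {1..n}" "Suc i \<noteq> Suc j" using assms(1) by auto
    hence "sig w (Suc i) \<noteq> sig w (Suc j)" using assms(4) by (meson inj_on_eq_iff)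
    thus "map fst w ! i \<noteq> map fst w ! j" using \<open>i < length (map fst w)\<close> \<open>j < length (map fst w)\<close>
      by (simp add: sig_def)
  qed
  have s: "set (map fst w) \<subseteq> {1..n}"
  proof
    fix x assume "x \<in> set (map fst w)"
    then obtain k where "k < n" "x = fst (w ! k)" using assms(1) by (auto simp: in_set_conv_nth)
    hence "x = sig w (Suc k)" "Suc k \<in> {1..n}" by (auto simp: sig_def)
    thus "x \<in> {1..n}" using assms(2) by auto
  qed
  have "card (set (map fst w)) = n" using distinct_card[OF d] assms(1) by simp
  hence "set (map fst w) = {1..n}" using s by (simp add: card_subset_eq)
  moreover have "\<forall>x\<in>set w. snd x < r"
  proof
    fix x assume "x \<in> set w"
    then obtain k where "k < n" "x = w ! k" using assms(1) by (auto simp: in_set_conv_nth)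
    hence "x = w ! (Suc k - 1)" "Suc k \<in> {1..n}" by auto
    thus "snd x < r" using assms(3)[of "Suc k"] by (simp add: col_def)
  qed
  ultimately show ?thesis using d assms(1) by (simp add: in_G_def)
qed

lemma modarith: "(z::nat) < r \<Longrightarrow> (y + (r - ((r - z) mod r) mod r)) mod r = (z + y) mod r"
proof (cases "z = 0")
  case True thus ?thesis by simp
next
  case False
  assume "z < r"
  hence "(r - z) mod r = r - z" using False by simp
  thus ?thesis using \<open>z < r\<close> by (simp add: add.commute)
qed

lemma sig_surj:
  assumes "in_G r n w" shows "sig w ` {1..n} = {1..n}"
  using in_G_facts[OF assms] by (intro endo_inj_surj) auto

lemma step:
  assumes G: "in_G r n w" and n: "n \<ge> 1" and r: "r \<ge> 1"
  obtains c w' where "c \<in> {1..n}" "sig w c = n" "\<And>i. i\<in>{1..n} \<Longrightarrow> sig w i = n \<Longrightarrow> i = c"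
    "in_G r (n-1) w'" "bcode r w = bcode r w' @ [(c, (r - col w c) mod r)]"
    "\<And>i. i\<in>{1..n-1} \<Longrightarrow> sig w' i = (if i = c then sig w n else sig w i)"
    "\<And>i. i\<in>{1..n-1} \<Longrightarrow> col w' i = (if i = c then (col w c + col w n) mod r else col w i)"
proof -
  note F = in_G_facts[OF G]
  obtain m where m: "n = Suc m" using n by (cases n) auto
  obtain c0 where c0: "c0 \<in> {1..n}" "sig w c0 = n" using sig_surj[OF G] n
    by (metis atLeastAtMost_iff imageE order_refl)
  have uniq: "\<And>i. i\<in>{1..n} \<Longrightarrow> sig w i = n \<Longrightarrow> i = c0"
    using F(4) c0 by (metis inj_on_eq_iff)
  define c where "c = pos_of w n"
  have L: "(LEAST k. k < length w \<and> fst (w ! k) = n) = c0 - 1"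
  proof (rule Least_equality)
    show "c0 - 1 < length w \<and> fst (w ! (c0 - 1)) = n" using c0 F(1) by (auto simp: sig_def)
  next
    fix y assume "y < length w \<and> fst (w ! y) = n"
    hence "Suc y \<in> {1..n}" "sig w (Suc y) = n" using F(1) by (auto simp: sig_def)
    hence "Suc y = c0" using uniq by blast
    thus "c0 - 1 \<le> y" by simp
  qed
  have cc: "c = c0" unfolding c_def pos_of_def L using c0 by simp
  define e where "e = (r - col w c) mod r"
  define w' where "w' = (if c < n then take m (rmul r w c e n) else take m w)"
  have zc: "snd (w ! (c - 1)) = col w c" by (simp add: col_def)
  have B: "bcode r w = bcode_aux r m w' @ [(c, e)]"
  proof -
    have p: "pos_of w (Suc m) = c" using c_def m by simp
    have zc2: "snd (w ! (c - Suc 0)) mod r = col w c" using F(3)[of c] c0 cc by (simp add: col_def)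
    show ?thesis unfolding bcode_def F(1) w'_def e_def m
      by (simp add: Let_def p zc2)
  qed
  have lw': "length w' = m" unfolding w'_def rmul_def using F(1) m by simp
  have nth: "\<And>k. k < m \<Longrightarrow> w' ! k = (if k = c - 1 then (fst (w ! m), (col w c + col w n) mod r) else w ! k)"
  proof -
    fix k assume k: "k < m"
    show "w' ! k = (if k = c - 1 then (fst (w ! m), (col w c + col w n) mod r) else w ! k)"
    proof (cases "c < n")
      case True
      have "(snd (w ! (n - 1)) + (r - e mod r)) mod r = (col w c + col w n) mod r"
        unfolding e_def using modarith[OF F(3)[of c]] c0 cc by (simp add: col_def)
      thus ?thesis unfolding w'_def rmul_def using True k F(1) m c0 cc by (auto simp: nth_list_update)
    next
      case False
      hence "c = n" using c0 cc by auto
      thus ?thesis unfolding w'_def using k m by auto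
    qed
  qed
  have c1: "c \<ge> 1" using c0 cc by simp
  have nth2: "\<And>i. i\<in>{1..n-1} \<Longrightarrow> w' ! (i - 1) = (if i = c then (fst (w ! (n-1)), (col w c + col w n) mod r) else w ! (i - 1))"
  proof -
    fix i assume i: "i\<in>{1..n-1}"
    hence "i - 1 < m" using m by auto
    moreover have "(i - 1 = c - 1) = (i = c)" using i c1 by auto
    ultimately show "w' ! (i - 1) = (if i = c then (fst (w ! (n-1)), (col w c + col w n) mod r) else w ! (i - 1))"
      using nth[of "i - 1"] m by simp
  qed
  have sig': "\<And>i. i\<in>{1..n-1} \<Longrightarrow> sig w' i = (if i = c then sig w n else sig w i)"
    unfolding sig_def[of w'] using nth2 by (simp add: sig_def)
  have col': "\<And>i. i\<in>{1..n-1} \<Longrightarrow> col w' i = (if i = c then (col w c + col w n) mod r else col w i)"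
    unfolding col_def[of w'] using nth2 by (simp add: col_def)
  have G': "in_G r (n-1) w'"
  proof (rule in_G_intro)
    show "length w' = n - 1" using lw' m by simp
  next
    fix i assume i: "i \<in> {1..n-1}"
    hence i1: "i \<in> {1..n}" by auto
    show "sig w' i \<in> {1..n-1}"
    proof (cases "i = c")
      case True
      hence "c \<noteq> n" using i by auto
      hence "sig w n \<noteq> n" using uniq cc n by auto
      thus ?thesis using sig'[OF i] True F(2)[of n] n by auto
    next
      case False
      hence "sig w i \<noteq> n" using uniq cc i1 by auto
      thus ?thesis using sig'[OF i] False F(2)[OF i1] by auto
    qed
    show "col w' i < r" using col'[OF i] F(3)[OF i1] r by auto
  next
    show "inj_on (sig w') {1..n - 1}"
    proof
      fix i j assume i: "i \<in> {1..n-1}" and j: "j \<in> {1..n-1}" and eq: "sig w' i = sig w' j"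
      have sn: "\<And>k. k \<in> {1..n-1} \<Longrightarrow> sig w' k = sig w (if k = c then n else k)"
        using sig' by auto
      have "(if i = c then n else i) \<in> {1..n}" "(if j = c then n else j) \<in> {1..n}" using i j n by auto
      hence "(if i = c then n else i) = (if j = c then n else j)"
        using eq sn[OF i] sn[OF j] F(4) by (simp add: inj_on_eq_iff)
      thus "i = j" using i j by (auto split: if_splits)
    qed
  qed
  have bb: "bcode r w' = bcode_aux r m w'" unfolding bcode_def lw' ..
  have cm: "c \<in> {1..n}" "sig w c = n" using c0 cc by auto
  have uq: "\<And>i. i\<in>{1..n} \<Longrightarrow> sig w i = n \<Longrightarrow> i = c" using uniq cc by auto
  have B2: "bcode r w = bcode r w' @ [(c, (r - col w c) mod r)]" using B unfolding bb e_def .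
  show ?thesis by (rule that[OF cm uq G' B2 sig' col'])
qed



definition neg :: "nat \<Rightarrow> nat \<Rightarrow> nat" where "neg r x = (r - x) mod r"

lemma neg_neg: "z < r \<Longrightarrow> neg r (neg r z) = z"
  unfolding neg_def using modarith[of z r 0] by simp

lemma length_bcode_aux: "length (bcode_aux r j w) = j"
  by (induction j arbitrary: w) (simp_all add: Let_def)

lemma length_bcode: "length (bcode r w) = length w"
  by (simp add: bcode_def length_bcode_aux)

definition LRmax :: "cletter list \<Rightarrow> nat \<Rightarrow> bool" where
  "LRmax w i \<longleftrightarrow> (\<forall>j. 1 \<le> j \<and> j < i \<longrightarrow> sig w j < sig w i)"

definition RLmin :: "cletter list \<Rightarrow> nat \<Rightarrow> bool" where
  "RLmin b i \<longleftrightarrow> (\<forall>j. i < j \<and> j \<le> length b \<longrightarrow> fst (b ! (i - 1)) < fst (b ! (j - 1)))"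

lemma lemA:
  assumes "in_G r n w" "r \<ge> 1"
  shows "(\<forall>p. {i. i \<in> {1..n} \<and> i < p \<and> LRmax w i} =
           {fst (bcode r w ! (j-1)) | j. j \<in> {1..n} \<and> fst (bcode r w ! (j-1)) < p \<and> RLmin (bcode r w) j})
       \<and> (\<forall>j\<in>{1..n}. RLmin (bcode r w) j \<longrightarrow> fst (bcode r w ! (j-1)) \<in> {1..n}
            \<and> sig w (fst (bcode r w ! (j-1))) = j \<and> col w (fst (bcode r w ! (j-1))) = neg r (snd (bcode r w ! (j-1))))"
  using assms
proof (induction n arbitrary: w)
  case 0
  thus ?case by auto
next
  case (Suc m)
  let ?n = "Suc m"
  have n1: "1 \<le> Suc m" by simp
  obtain c w' where c: "c \<in> {1..?n}" "sig w c = ?n" "\<And>i. i\<in>{1..?n} \<Longrightarrow> sig w i = ?n \<Longrightarrow> i = c"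
    and G': "in_G r (?n-1) w'" and B: "bcode r w = bcode r w' @ [(c, (r - col w c) mod r)]"
    and S: "\<And>i. i\<in>{1..?n-1} \<Longrightarrow> sig w' i = (if i = c then sig w ?n else sig w i)"
    and C: "\<And>i. i\<in>{1..?n-1} \<Longrightarrow> col w' i = (if i = c then (col w c + col w ?n) mod r else col w i)"
    using step[OF Suc.prems(1) n1 Suc.prems(2)] by blast
  note F = in_G_facts[OF Suc.prems(1)]
  note F' = in_G_facts[OF G']
  have G'': "in_G r m w'" using G' by simp
  note IH = Suc.IH[OF G'' Suc.prems(2)]
  define b' where "b' = bcode r w'"
  have lb': "length b' = m" using F' b'_def length_bcode by simp
  have bj: "\<And>j. j \<in> {1..m} \<Longrightarrow> bcode r w ! (j-1) = b' ! (j-1)"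
    using B lb' unfolding b'_def[symmetric] by (auto simp: nth_append)
  have bn: "bcode r w ! (?n - 1) = (c, (r - col w c) mod r)"
    using B lb' unfolding b'_def[symmetric] by (auto simp: nth_append)
  have lb: "length (bcode r w) = ?n" using B lb' b'_def by simp
  have RLn: "RLmin (bcode r w) ?n" unfolding RLmin_def lb by auto
  have RLj: "\<And>j. j \<in> {1..m} \<Longrightarrow> RLmin (bcode r w) j \<longleftrightarrow> RLmin b' j \<and> fst (b' ! (j-1)) < c"
  proof -
    fix j assume j: "j \<in> {1..m}"
    show "RLmin (bcode r w) j \<longleftrightarrow> RLmin b' j \<and> fst (b' ! (j-1)) < c"
    proof
      assume R: "RLmin (bcode r w) j"
      have "fst (b' ! (j-1)) < c" using R[unfolded RLmin_def, rule_format, of ?n] j bj[OF j] bn lb by auto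
      moreover have "RLmin b' j" unfolding RLmin_def
      proof (intro allI impI)
        fix k assume "j < k \<and> k \<le> length b'"
        thus "fst (b' ! (j - 1)) < fst (b' ! (k - 1))"
          using R[unfolded RLmin_def, rule_format, of k] j bj[OF j] bj[of k] lb lb' by auto
      qed
      ultimately show "RLmin b' j \<and> fst (b' ! (j-1)) < c" by simp
    next
      assume R: "RLmin b' j \<and> fst (b' ! (j-1)) < c"
      show "RLmin (bcode r w) j" unfolding RLmin_def
      proof (intro allI impI)
        fix k assume k: "j < k \<and> k \<le> length (bcode r w)"
        show "fst (bcode r w ! (j - 1)) < fst (bcode r w ! (k - 1))"
        proof (cases "k = ?n")
          case True thus ?thesis using R bj[OF j] bn by simp
        next
          case False thus ?thesis using R[THEN conjunct1, unfolded RLmin_def, rule_format, of k]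
              k j bj[OF j] bj[of k] lb lb' by auto
        qed
      qed
    qed
  qed
  have LRw: "\<And>i. i \<in> {1..?n} \<Longrightarrow> LRmax w i \<longleftrightarrow> (i = c \<or> (i < c \<and> LRmax w' i))"
  proof -
    fix i assume i: "i \<in> {1..?n}"
    have eqs: "\<And>j. 1 \<le> j \<Longrightarrow> j < c \<Longrightarrow> sig w' j = sig w j" using S c(1) by auto
    show "LRmax w i \<longleftrightarrow> (i = c \<or> (i < c \<and> LRmax w' i))"
    proof (cases "i = c")
      case True
      have "\<And>j. 1 \<le> j \<Longrightarrow> j < c \<Longrightarrow> sig w j < sig w c"
      proof -
        fix j assume "1 \<le> j" "j < c"
        hence "j \<in> {1..?n}" "j \<noteq> c" using c by auto
        thus "sig w j < sig w c" using c(2,3) F(2) by fastforce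
      qed
      thus ?thesis using True by (simp add: LRmax_def)
    next
      case False
      show ?thesis
      proof (cases "i < c")
        case True
        have "LRmax w i \<longleftrightarrow> LRmax w' i" unfolding LRmax_def using eqs True i by auto
        thus ?thesis using True False by simp
      next
        case False2: False
        have "\<not> LRmax w i"
        proof
          assume "LRmax w i"
          moreover have "1 \<le> c" "c < i" using False False2 c(1) by auto
          ultimately have "sig w c < sig w i" unfolding LRmax_def by blast
          thus False using F(2)[OF i] c(2) by simp
        qed
        thus ?thesis using False False2 by simp
      qed
    qed
  qed
  have partA: "\<forall>p. {i. i \<in> {1..?n} \<and> i < p \<and> LRmax w i} =
           {fst (bcode r w ! (j-1)) | j. j \<in> {1..?n} \<and> fst (bcode r w ! (j-1)) < p \<and> RLmin (bcode r w) j}"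
  proof
    fix p
    have IHp: "{i. i \<in> {1..m} \<and> i < min p c \<and> LRmax w' i} =
           {fst (b' ! (j-1)) | j. j \<in> {1..m} \<and> fst (b' ! (j-1)) < min p c \<and> RLmin b' j}"
      using IH[THEN conjunct1, rule_format, of "min p c"] unfolding b'_def by simp
    have L: "{i. i \<in> {1..?n} \<and> i < p \<and> LRmax w i} = {i. i = c \<and> c < p} \<union> {i. i \<in> {1..m} \<and> i < min p c \<and> LRmax w' i}"
      using LRw c(1) by auto
    have R: "{fst (bcode r w ! (j-1)) | j. j \<in> {1..?n} \<and> fst (bcode r w ! (j-1)) < p \<and> RLmin (bcode r w) j}
      = {i. i = c \<and> c < p} \<union> {fst (b' ! (j-1)) | j. j \<in> {1..m} \<and> fst (b' ! (j-1)) < min p c \<and> RLmin b' j}"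
    proof (rule set_eqI, rule iffI)
      fix x assume "x \<in> {fst (bcode r w ! (j-1)) | j. j \<in> {1..?n} \<and> fst (bcode r w ! (j-1)) < p \<and> RLmin (bcode r w) j}"
      then obtain j where j: "j \<in> {1..?n}" "x = fst (bcode r w ! (j-1))" "x < p" "RLmin (bcode r w) j" by blast
      show "x \<in> {i. i = c \<and> c < p} \<union> {fst (b' ! (j-1)) | j. j \<in> {1..m} \<and> fst (b' ! (j-1)) < min p c \<and> RLmin b' j}"
      proof (cases "j = ?n")
        case True thus ?thesis using j bn by simp
      next
        case False
        hence jm: "j \<in> {1..m}" using j by auto
        thus ?thesis using j RLj[OF jm] bj[OF jm] by auto
      qed
    next
      fix x assume x: "x \<in> {i. i = c \<and> c < p} \<union> {fst (b' ! (j-1)) | j. j \<in> {1..m} \<and> fst (b' ! (j-1)) < min p c \<and> RLmin b' j}"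
      show "x \<in> {fst (bcode r w ! (j-1)) | j. j \<in> {1..?n} \<and> fst (bcode r w ! (j-1)) < p \<and> RLmin (bcode r w) j}"
      proof (cases "x = c \<and> c < p")
        case True
        hence "x = fst (bcode r w ! (?n-1)) \<and> ?n \<in> {1..?n} \<and> fst (bcode r w ! (?n-1)) < p \<and> RLmin (bcode r w) ?n"
          using bn RLn by simp
        thus ?thesis by blast
      next
        case False
        then obtain j where j: "j \<in> {1..m}" "x = fst (b' ! (j-1))" "x < min p c" "RLmin b' j" using x by blast
        hence "j \<in> {1..?n}" "x = fst (bcode r w ! (j-1))" "fst (bcode r w ! (j-1)) < p" "RLmin (bcode r w) j"
          using RLj[OF j(1)] bj[OF j(1)] by auto
        thus ?thesis by blast
      qed
    qed
    show "{i. i \<in> {1..?n} \<and> i < p \<and> LRmax w i} =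
           {fst (bcode r w ! (j-1)) | j. j \<in> {1..?n} \<and> fst (bcode r w ! (j-1)) < p \<and> RLmin (bcode r w) j}"
      using L R IHp by simp
  qed
  have partB: "\<forall>j\<in>{1..?n}. RLmin (bcode r w) j \<longrightarrow> fst (bcode r w ! (j-1)) \<in> {1..?n}
            \<and> sig w (fst (bcode r w ! (j-1))) = j \<and> col w (fst (bcode r w ! (j-1))) = neg r (snd (bcode r w ! (j-1)))"
  proof (intro ballI impI)
    fix j assume j: "j \<in> {1..?n}" and R: "RLmin (bcode r w) j"
    show "fst (bcode r w ! (j-1)) \<in> {1..?n}
            \<and> sig w (fst (bcode r w ! (j-1))) = j \<and> col w (fst (bcode r w ! (j-1))) = neg r (snd (bcode r w ! (j-1)))"
    proof (cases "j = ?n")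
      case True
      have "neg r ((r - col w c) mod r) = col w c" using neg_neg[OF F(3)[OF c(1)]] by (simp add: neg_def)
      thus ?thesis using True bn c(1,2) by simp
    next
      case False
      hence jm: "j \<in> {1..m}" using j by auto
      have R': "RLmin b' j" "fst (b' ! (j-1)) < c" using RLj[OF jm] R by auto
      have I: "fst (b' ! (j-1)) \<in> {1..m}" "sig w' (fst (b' ! (j-1))) = j"
          "col w' (fst (b' ! (j-1))) = neg r (snd (b' ! (j-1)))"
        using IH[THEN conjunct2, rule_format, OF jm] R'(1) unfolding b'_def by auto
      have "fst (b' ! (j-1)) \<in> {1..?n-1}" using I(1) by simp
      note S' = S[OF this] and C' = C[OF this]
      show ?thesis using I R'(2) S' C' bj[OF jm] by auto
    qed
  qed
  show ?case using partA partB by blast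
qed



definition negset :: "nat \<Rightarrow> cletter set \<Rightarrow> cletter set" where
  "negset r B = (\<lambda>x. (fst x, neg r (snd x))) ` B"

lemma mem_colpart_negset: "k \<in> colpart (negset r B) t \<longleftrightarrow> (\<exists>x\<in>B. fst x = k \<and> (r - snd x) mod r = t)"
  unfolding colpart_def negset_def neg_def by force

lemma colpart_negset:
  assumes "\<forall>x\<in>B. snd x < r" "r \<ge> 1"
  shows "colpart (negset r B) 0 = colpart B 0"
    "1 \<le> t \<Longrightarrow> t \<le> r - 1 \<Longrightarrow> colpart (negset r B) t = colpart B (r - t)"
proof -
  show "colpart (negset r B) 0 = colpart B 0"
  proof (rule set_eqI)
    fix k
    have "(\<exists>x\<in>B. fst x = k \<and> (r - snd x) mod r = 0) \<longleftrightarrow> (k, 0) \<in> B"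
    proof
      assume "\<exists>x\<in>B. fst x = k \<and> (r - snd x) mod r = 0"
      then obtain x where x: "x \<in> B" "fst x = k" "(r - snd x) mod r = 0" by auto
      have "snd x = 0"
      proof (rule ccontr)
        assume "snd x \<noteq> 0"
        moreover have "snd x < r" using assms(1) x(1) by blast
        ultimately have "r - snd x < r" "r - snd x > 0" by auto
        hence "(r - snd x) mod r = r - snd x" by (simp only: mod_less)
        thus False using x(3) \<open>r - snd x > 0\<close> by linarith
      qed
      thus "(k, 0) \<in> B" using x by (metis prod.collapse)
    next
      assume "(k, 0) \<in> B" thus "\<exists>x\<in>B. fst x = k \<and> (r - snd x) mod r = 0"
        by (intro bexI[of _ "(k,0)"]) simp_all
    qed
    thus "k \<in> colpart (negset r B) 0 \<longleftrightarrow> k \<in> colpart B 0"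
      unfolding mem_colpart_negset by (simp add: colpart_def)
  qed
next
  assume t: "1 \<le> t" "t \<le> r - 1"
  show "colpart (negset r B) t = colpart B (r - t)"
  proof (rule set_eqI)
    fix k
    have "(\<exists>x\<in>B. fst x = k \<and> (r - snd x) mod r = t) \<longleftrightarrow> (k, r - t) \<in> B"
    proof
      assume "\<exists>x\<in>B. fst x = k \<and> (r - snd x) mod r = t"
      then obtain x where x: "x \<in> B" "fst x = k" "(r - snd x) mod r = t" by auto
      have "snd x \<noteq> 0"
      proof
        assume "snd x = 0" thus False using x(3) t by simp
      qed
      moreover have sx: "snd x < r" using assms(1) x(1) by blast
      ultimately have "r - snd x < r" by auto
      hence "(r - snd x) mod r = r - snd x" by (simp only: mod_less)
      hence "snd x = r - t" using x(3) sx by linarith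
      thus "(k, r - t) \<in> B" using x by (metis prod.collapse)
    next
      assume "(k, r - t) \<in> B"
      moreover have "(r - (r - t)) mod r = t" using t by (simp add: mod_less)
      ultimately show "\<exists>x\<in>B. fst x = k \<and> (r - snd x) mod r = t"
        by (intro bexI[of _ "(k,r-t)"]) simp_all
    qed
    thus "k \<in> colpart (negset r B) t \<longleftrightarrow> k \<in> colpart B (r - t)"
      unfolding mem_colpart_negset by (simp add: colpart_def)
  qed
qed


lemma nth_sigcol: "w ! (i - 1) = (sig w i, col w i)"
  by (simp add: sig_def col_def)

lemma Lmal_thm:
  assumes "in_G r n w" "r \<ge> 1"
  shows "Lmal w = negset r (Rmip (bcode r w))"
proof -
  define b where "b = bcode r w"
  note A = lemA[OF assms, folded b_def]
  have ln: "length w = n" using in_G_facts[OF assms(1)] by simp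
  have lb: "length b = n" using ln b_def length_bcode by simp
  have A1: "{i. i \<in> {1..n} \<and> LRmax w i} = {fst (b ! (j-1)) | j. j \<in> {1..n} \<and> RLmin b j}"
  proof -
    have "{i. i \<in> {1..n} \<and> i < Suc n \<and> LRmax w i} = {fst (b ! (j-1)) | j. j \<in> {1..n} \<and> fst (b ! (j-1)) < Suc n \<and> RLmin b j}"
      using A by blast
    moreover have "{i. i \<in> {1..n} \<and> i < Suc n \<and> LRmax w i} = {i. i \<in> {1..n} \<and> LRmax w i}" by auto
    moreover have "{fst (b ! (j-1)) | j. j \<in> {1..n} \<and> fst (b ! (j-1)) < Suc n \<and> RLmin b j}
        = {fst (b ! (j-1)) | j. j \<in> {1..n} \<and> RLmin b j}"
      using A by fastforce
    ultimately show ?thesis by simp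
  qed
  have Lm: "Lmal w = {w ! (i-1) | i. i \<in> {1..n} \<and> LRmax w i}"
    unfolding Lmal_def LRmax_def ln by simp
  have Rm: "Rmip b = {(i, snd (b ! (i-1))) | i. i \<in> {1..n} \<and> RLmin b i}"
    unfolding Rmip_def RLmin_def lb by simp
  show ?thesis unfolding b_def[symmetric]
  proof (rule set_eqI, rule iffI)
    fix x assume "x \<in> Lmal w"
    then obtain i where i: "i \<in> {1..n}" "LRmax w i" "x = w ! (i-1)" using Lm by blast
    then obtain j where j: "j \<in> {1..n}" "RLmin b j" "i = fst (b ! (j-1))" using A1 by blast
    have "x = (j, neg r (snd (b ! (j-1))))" using A j i nth_sigcol by metis
    moreover have mem: "(j, snd (b ! (j-1))) \<in> Rmip b" using Rm j by blast
    ultimately show "x \<in> negset r (Rmip b)" unfolding negset_def by (intro image_eqI[OF _ mem]) simp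
  next
    fix x assume "x \<in> negset r (Rmip b)"
    then obtain j where j: "j \<in> {1..n}" "RLmin b j" "x = (j, neg r (snd (b ! (j-1))))"
      unfolding negset_def Rm by auto
    define i where "i = fst (b ! (j-1))"
    have "i \<in> {1..n}" "LRmax w i" using A1 j i_def by auto
    moreover have "x = w ! (i-1)" using A j i_def nth_sigcol by metis
    ultimately show "x \<in> Lmal w" using Lm by blast
  qed
qed

lemma Lmap_thm:
  assumes "in_G r n w" "r \<ge> 1"
  shows "Lmap w = negset r (Rmil (bcode r w))"
proof -
  define b where "b = bcode r w"
  note A = lemA[OF assms, folded b_def]
  have ln: "length w = n" using in_G_facts[OF assms(1)] by simp
  have lb: "length b = n" using ln b_def length_bcode by simp
  have A1: "{i. i \<in> {1..n} \<and> LRmax w i} = {fst (b ! (j-1)) | j. j \<in> {1..n} \<and> RLmin b j}"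
  proof -
    have "{i. i \<in> {1..n} \<and> i < Suc n \<and> LRmax w i} = {fst (b ! (j-1)) | j. j \<in> {1..n} \<and> fst (b ! (j-1)) < Suc n \<and> RLmin b j}"
      using A by blast
    moreover have "{i. i \<in> {1..n} \<and> i < Suc n \<and> LRmax w i} = {i. i \<in> {1..n} \<and> LRmax w i}" by auto
    moreover have "{fst (b ! (j-1)) | j. j \<in> {1..n} \<and> fst (b ! (j-1)) < Suc n \<and> RLmin b j}
        = {fst (b ! (j-1)) | j. j \<in> {1..n} \<and> RLmin b j}"
      using A by fastforce
    ultimately show ?thesis by simp
  qed
  have Lm: "Lmap w = {(i, col w i) | i. i \<in> {1..n} \<and> LRmax w i}"
    unfolding Lmap_def LRmax_def ln by simp
  have Rm: "Rmil b = {b ! (i-1) | i. i \<in> {1..n} \<and> RLmin b i}"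
    unfolding Rmil_def RLmin_def lb by simp
  show ?thesis unfolding b_def[symmetric]
  proof (rule set_eqI, rule iffI)
    fix x assume "x \<in> Lmap w"
    then obtain i where i: "i \<in> {1..n}" "LRmax w i" "x = (i, col w i)" using Lm by blast
    then obtain j where j: "j \<in> {1..n}" "RLmin b j" "i = fst (b ! (j-1))" using A1 by blast
    have "x = (fst (b ! (j-1)), neg r (snd (b ! (j-1))))" using A j i by metis
    moreover have mem: "b ! (j-1) \<in> Rmil b" using Rm j by blast
    ultimately show "x \<in> negset r (Rmil b)" unfolding negset_def by (intro image_eqI[OF _ mem]) simp
  next
    fix x assume "x \<in> negset r (Rmil b)"
    then obtain j where j: "j \<in> {1..n}" "RLmin b j" "x = (fst (b ! (j-1)), neg r (snd (b ! (j-1))))"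
      unfolding negset_def Rm by auto
    define i where "i = fst (b ! (j-1))"
    have "i \<in> {1..n}" "LRmax w i" using A1 j i_def by auto
    moreover have "x = (i, col w i)" using A j i_def by metis
    ultimately show "x \<in> Lmap w" using Lm by blast
  qed
qed



lemma funpow_in: "(\<And>y. y \<in> S \<Longrightarrow> f y \<in> S) \<Longrightarrow> x \<in> S \<Longrightarrow> (f ^^ k) x \<in> S"
  by (induction k) auto

lemma funpow_cancel:
  assumes "inj_on f S" "\<And>y. y \<in> S \<Longrightarrow> f y \<in> S" "a \<in> S" "b \<in> S" "(f ^^ i) a = (f ^^ i) b"
  shows "a = b"
  using assms(5)
proof (induction i)
  case 0 thus ?case by simp
next
  case (Suc i)
  have "(f ^^ i) a \<in> S" "(f ^^ i) b \<in> S" using funpow_in assms by metis+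
  hence "(f ^^ i) a = (f ^^ i) b" using Suc.prems assms(1) by (simp add: inj_on_eq_iff)
  thus ?case using Suc.IH by simp
qed

lemma return:
  assumes "finite S" "inj_on f S" "\<And>y. y \<in> S \<Longrightarrow> f y \<in> S" "x \<in> S"
  shows "\<exists>k>0. (f ^^ k) x = x"
proof -
  let ?g = "\<lambda>i. (f ^^ i) x"
  have sub: "?g ` {0..card S} \<subseteq> S" using funpow_in[of S f] assms(3,4) by auto
  have "\<not> inj_on ?g {0..card S}"
  proof
    assume "inj_on ?g {0..card S}"
    hence "card {0..card S} \<le> card S" using card_inj_on_le[OF _ sub assms(1)] by simp
    thus False by simp
  qed
  then obtain i j where ij: "i \<in> {0..card S}" "j \<in> {0..card S}" "i \<noteq> j" "?g i = ?g j"
    unfolding inj_on_def by blast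
  define a where "a = min i j"
  define b where "b = max i j"
  have ab: "a < b" "?g a = ?g b" using ij a_def b_def by (auto simp: min_def max_def)
  have "(f ^^ a) ((f ^^ (b - a)) x) = (f ^^ (a + (b - a))) x" by (simp add: funpow_add)
  also have "a + (b - a) = b" using ab by simp
  finally have eq: "(f ^^ a) ((f ^^ (b - a)) x) = (f ^^ a) x" using ab by simp
  have in1: "(f ^^ (b - a)) x \<in> S" using funpow_in[of S f] assms(3,4) by blast
  have "(f ^^ (b - a)) x = x" by (rule funpow_cancel[OF assms(2) assms(3) in1 assms(4) eq])
  thus ?thesis using ab by (intro exI[of _ "b - a"]) simp
qed

definition orb :: "(nat \<Rightarrow> nat) \<Rightarrow> nat \<Rightarrow> nat set" where
  "orb f i = {(f ^^ k) i | k. True}"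

lemma orb_step: "y \<in> orb f i \<Longrightarrow> f y \<in> orb f i"
  unfolding orb_def by (auto intro: exI[of _ "Suc _"])

lemma orb_self: "i \<in> orb f i"
  unfolding orb_def by (auto intro: exI[of _ 0])

lemma orb_f:
  assumes "finite S" "inj_on f S" "\<And>y. y \<in> S \<Longrightarrow> f y \<in> S" "x \<in> S"
  shows "orb f (f x) = orb f x"
proof
  show "orb f (f x) \<subseteq> orb f x"
  proof
    fix y assume "y \<in> orb f (f x)"
    then obtain k where "y = (f ^^ k) (f x)" unfolding orb_def by blast
    hence "y = (f ^^ Suc k) x" by (simp add: funpow_Suc_right del: funpow.simps)
    thus "y \<in> orb f x" unfolding orb_def by blast
  qed
  obtain k where k: "k > 0" "(f ^^ k) x = x" using return[OF assms] by blast
  have "(f ^^ (k - 1)) (f x) = (f ^^ Suc (k - 1)) x" by (simp add: funpow_Suc_right del: funpow.simps)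
  also have "Suc (k - 1) = k" using k by simp
  finally have "(f ^^ (k - 1)) (f x) = x" using k by simp
  hence "x \<in> orb f (f x)" unfolding orb_def by (intro CollectI exI[of _ "k - 1"]) simp
  thus "orb f x \<subseteq> orb f (f x)" unfolding orb_def
  proof -
    assume "x \<in> {(f ^^ k) (f x) |k. True}"
    then obtain m where m: "x = (f ^^ m) (f x)" by blast
    show "{(f ^^ k) x |k. True} \<subseteq> {(f ^^ k) (f x) |k. True}"
    proof
      fix y assume "y \<in> {(f ^^ k) x |k. True}"
      then obtain j where "y = (f ^^ j) x" by blast
      hence "y = (f ^^ (j + m)) (f x)" using m by (simp add: funpow_add)
      thus "y \<in> {(f ^^ k) (f x) |k. True}" by blast
    qed
  qed
qed

lemma orb_sub: assumes "\<And>y. y \<in> S \<Longrightarrow> f y \<in> S" "x \<in> S" shows "orb f x \<subseteq> S"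
proof
  fix y assume "y \<in> orb f x"
  then obtain k where "y = (f ^^ k) x" unfolding orb_def by auto
  thus "y \<in> S" using funpow_in[of S f, OF assms(1) assms(2)] by simp
qed

lemma fixed_avoid:
  fixes f :: "nat \<Rightarrow> nat"
  assumes inj: "inj_on f {1..n}" and into: "\<And>y. y \<in> {1..n} \<Longrightarrow> f y \<in> {1..n}"
    and fn: "f n = n" and i: "i \<in> {1..n} - {n}"
  shows "(f ^^ k) i \<in> {1..n} - {n}"
proof (induction k)
  case 0 thus ?case using i by simp
next
  case (Suc k)
  have "n \<in> {1..n}" using i by auto
  hence "f ((f ^^ k) i) \<noteq> f n" using Suc inj by (metis DiffE inj_on_eq_iff singletonI)
  thus ?case using Suc into fn by auto
qed

lemma splice:
  fixes f g :: "nat \<Rightarrow> nat"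
  assumes inj: "inj_on f {1..n}" and into: "\<And>y. y \<in> {1..n} \<Longrightarrow> f y \<in> {1..n}"
    and gdef: "\<And>y. y \<in> {1..n} - {n} \<Longrightarrow> g y = (if f y = n then f n else f y)"
    and i: "i \<in> {1..n} - {n}"
  shows "orb g i = orb f i - {n}"
proof
  have nD: "n \<in> {1..n}" using i by auto
  have A: "(g ^^ k) i \<in> orb f i \<and> (g ^^ k) i \<in> {1..n} - {n}" for k
  proof (induction k)
    case 0 thus ?case using i orb_self by simp
  next
    case (Suc k)
    define y where "y = (g ^^ k) i"
    have y: "y \<in> orb f i" "y \<in> {1..n} - {n}" using Suc y_def by auto
    have "g y \<in> orb f i \<and> g y \<in> {1..n} - {n}"
    proof (cases "f y = n")
      case True
      have "f n \<noteq> n"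
      proof
        assume "f n = n"
        hence "f y = f n" using True by simp
        hence "y = n" using inj y(2) nD by (simp add: inj_on_eq_iff)
        thus False using y(2) by simp
      qed
      moreover have "g y = f (f y)" using gdef[OF y(2)] True by simp
      ultimately show ?thesis using orb_step[OF orb_step[OF y(1)]] into[OF nD] True by auto
    next
      case False
      hence "g y = f y" using gdef[OF y(2)] by simp
      thus ?thesis using orb_step[OF y(1)] into y(2) False by auto
    qed
    thus ?case using y_def by simp
  qed
  show "orb g i \<subseteq> orb f i - {n}"
  proof
    fix x assume "x \<in> orb g i"
    then obtain k where "x = (g ^^ k) i" unfolding orb_def by auto
    thus "x \<in> orb f i - {n}" using A[of k] by auto
  qed
  have B: "(f ^^ k) i \<in> {1..n} \<and> ((f ^^ k) i \<noteq> n \<longrightarrow> (f ^^ k) i \<in> orb g i)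
      \<and> ((f ^^ k) i = n \<longrightarrow> (f ^^ Suc k) i \<in> orb g i)" for k
  proof (induction k)
    case 0
    have "i \<noteq> n" "i \<in> {1..n}" using i by auto
    thus ?case using orb_self by simp
  next
    case (Suc k)
    define x where "x = (f ^^ k) i"
    have x: "x \<in> {1..n}" "x \<noteq> n \<longrightarrow> x \<in> orb g i" "x = n \<longrightarrow> f x \<in> orb g i"
      using Suc x_def by auto
    have fx: "(f ^^ Suc k) i = f x" using x_def by simp
    have P1: "f x \<in> {1..n}" using into x(1) by simp
    have P2: "f x \<noteq> n \<longrightarrow> f x \<in> orb g i"
    proof
      assume fxn: "f x \<noteq> n"
      show "f x \<in> orb g i"
      proof (cases "x = n")
        case True thus ?thesis using x(3) by simp
      next
        case False
        hence "g x = f x" using gdef[of x] x(1) fxn by simp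
        thus ?thesis using orb_step[of x g i] x(2) False by simp
      qed
    qed
    have P3: "f x = n \<longrightarrow> f (f x) \<in> orb g i"
    proof
      assume fxn: "f x = n"
      show "f (f x) \<in> orb g i"
      proof (cases "x = n")
        case True
        hence "f n = n" using fxn by simp
        hence "(f ^^ k) i \<in> {1..n} - {n}" using fixed_avoid[OF inj into _ i] by blast
        thus ?thesis using True x_def by simp
      next
        case False
        hence "g x = f n" using gdef[of x] x(1) fxn by simp
        thus ?thesis using orb_step[of x g i] x(2) False fxn by simp
      qed
    qed
    show ?case using fx P1 P2 P3 by simp
  qed
  show "orb f i - {n} \<subseteq> orb g i"
  proof
    fix x assume "x \<in> orb f i - {n}"
    then obtain k where "x = (f ^^ k) i" "x \<noteq> n" unfolding orb_def by auto
    thus "x \<in> orb g i" using B[of k] by auto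
  qed
qed



definition cpair :: "nat \<Rightarrow> cletter list \<Rightarrow> nat \<Rightarrow> cletter" where
  "cpair r v i = (Min (orb (sig v) i), (\<Sum>k\<in>orb (sig v) i. col v k) mod r)"

lemma Cyc_alt: "Cyc r v = cpair r v ` {1..length v}"
  unfolding Cyc_def cpair_def cycle_of_def orb_def by auto

lemma Min_remove:
  fixes A :: "nat set"
  assumes "finite A" "A \<subseteq> {1..n}" "i \<in> A" "i \<noteq> n"
  shows "Min (A - {n}) = Min A"
proof -
  have ne: "A \<noteq> {}" using assms by auto
  have m: "Min A \<in> A" using Min_in[OF assms(1) ne] .
  have "Min A \<le> i" using Min_le[OF assms(1) assms(3)] .
  moreover have "i < n" using assms by auto
  ultimately have "Min A \<noteq> n" by simp
  hence m2: "Min A \<in> A - {n}" using m by simp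
  have f2: "finite (A - {n})" using assms(1) by simp
  have "Min (A - {n}) \<le> Min A" using Min_le[OF f2 m2] .
  moreover have "Min A \<le> Min (A - {n})" by (rule Min_antimono) (use m2 assms(1) in auto)
  ultimately show ?thesis by simp
qed

lemma funpow_fix: "f x = x \<Longrightarrow> (f ^^ k) x = x"
  by (induction k) auto

lemma Cyc_step:
  assumes G: "in_G r n w" and n: "n \<ge> 1" and r: "r \<ge> 1"
    and c: "c \<in> {1..n}" "sig w c = n" "\<And>i. i\<in>{1..n} \<Longrightarrow> sig w i = n \<Longrightarrow> i = c"
    and G': "in_G r (n-1) w'"
    and S: "\<And>i. i\<in>{1..n-1} \<Longrightarrow> sig w' i = (if i = c then sig w n else sig w i)"
    and C: "\<And>i. i\<in>{1..n-1} \<Longrightarrow> col w' i = (if i = c then (col w c + col w n) mod r else col w i)"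
  shows "Cyc r w = Cyc r w' \<union> (if c = n then {(n, col w n)} else {})"
proof -
  note F = in_G_facts[OF G]
  note F' = in_G_facts[OF G']
  define f where "f = sig w"
  define g where "g = sig w'"
  have inj: "inj_on f {1..n}" using F(4) f_def by simp
  have into: "\<And>y. y \<in> {1..n} \<Longrightarrow> f y \<in> {1..n}" using F(2) f_def by simp
  have nD: "n \<in> {1..n}" using n by simp
  have gdef: "\<And>y. y \<in> {1..n} - {n} \<Longrightarrow> g y = (if f y = n then f n else f y)"
  proof -
    fix y assume y: "y \<in> {1..n} - {n}"
    hence y1: "y \<in> {1..n-1}" by auto
    have "f y = n \<longleftrightarrow> y = c" using c(2,3) y f_def by auto
    thus "g y = (if f y = n then f n else f y)" using S[OF y1] f_def g_def by simp
  qed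
  have same: "cpair r w' i = cpair r w i" if i: "i \<in> {1..n-1}" for i
  proof -
    have iD: "i \<in> {1..n} - {n}" using i by auto
    define Ob where "Ob = orb f i"
    have og: "orb g i = Ob - {n}" using splice[OF inj into gdef iD] Ob_def by simp
    have OD: "Ob \<subseteq> {1..n}" using orb_sub[of "{1..n}" f i] into iD Ob_def by auto
    have fin: "finite Ob" using OD finite_subset by blast
    have iO: "i \<in> Ob" using orb_self Ob_def by simp
    have Mi: "Min (Ob - {n}) = Min Ob" using Min_remove[OF fin OD iO] iD by simp
    have sm: "(\<Sum>k\<in>Ob - {n}. col w' k) mod r = (\<Sum>k\<in>Ob. col w k) mod r"
    proof (cases "n \<in> Ob")
      case False
      have "c \<notin> Ob"
      proof
        assume "c \<in> Ob" hence "f c \<in> Ob" using orb_step Ob_def by simp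
        thus False using False c(2) f_def by simp
      qed
      have "\<And>k. k \<in> Ob \<Longrightarrow> col w' k = col w k"
      proof -
        fix k assume kO: "k \<in> Ob"
        have "k \<in> {1..n}" "k \<noteq> n" using OD False kO by auto
        hence "k \<in> {1..n-1}" "k \<noteq> c" using \<open>c \<notin> Ob\<close> kO by auto
        thus "col w' k = col w k" using C by simp
      qed
      hence "(\<Sum>k\<in>Ob. col w' k) = (\<Sum>k\<in>Ob. col w k)" by (rule sum.cong[OF refl])
      thus ?thesis using False by simp
    next
      case True
      then obtain k where k: "(f ^^ k) i = n" unfolding Ob_def orb_def by auto
      have "k \<noteq> 0" using k iD by (cases k) auto
      then obtain k0 where k0: "k = Suc k0" by (cases k) auto
      have "(f ^^ k0) i \<in> {1..n}" using funpow_in[of "{1..n}" f] into iD by auto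
      moreover have "sig w ((f ^^ k0) i) = n" using k k0 f_def by simp
      ultimately have "(f ^^ k0) i = c" using c(3) by blast
      hence cO: "c \<in> Ob" unfolding Ob_def orb_def by blast
      have cn: "c \<noteq> n"
      proof
        assume "c = n"
        hence "f n = n" using c(2) f_def by simp
        hence "(f ^^ k) i \<in> {1..n} - {n}" using fixed_avoid[OF inj into _ iD] by blast
        thus False using k by simp
      qed
      have c1: "c \<in> {1..n-1}" using c(1) cn by auto
      have f1: "finite (Ob - {n})" using fin by simp
      have cO': "c \<in> Ob - {n}" using cO cn by simp
      have eqo: "\<And>k. k \<in> Ob - {n} - {c} \<Longrightarrow> col w' k = col w k"
      proof -
        fix k assume kO: "k \<in> Ob - {n} - {c}"
        have "k \<in> {1..n}" "k \<noteq> n" "k \<noteq> c" using OD kO by auto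
        hence "k \<in> {1..n-1}" "k \<noteq> c" by auto
        thus "col w' k = col w k" using C by simp
      qed
      have s1: "(\<Sum>k\<in>Ob. col w k) = col w n + (col w c + (\<Sum>k\<in>Ob - {n} - {c}. col w k))"
        using sum.remove[OF fin True, of "col w"] sum.remove[OF f1 cO', of "col w"] by simp
      have s2: "(\<Sum>k\<in>Ob - {n}. col w' k) = col w' c + (\<Sum>k\<in>Ob - {n} - {c}. col w k)"
      proof -
        have "(\<Sum>k\<in>Ob - {n} - {c}. col w' k) = (\<Sum>k\<in>Ob - {n} - {c}. col w k)"
          by (rule sum.cong[OF refl eqo])
        thus ?thesis using sum.remove[OF f1 cO', of "col w'"] by simp
      qed
      have "col w' c = (col w c + col w n) mod r" using C[OF c1] by simp
      hence "(\<Sum>k\<in>Ob - {n}. col w' k) mod r = (col w c + col w n + (\<Sum>k\<in>Ob - {n} - {c}. col w k)) mod r"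
        using s2 by (simp add: mod_add_left_eq)
      thus ?thesis using s1 by (simp add: ac_simps)
    qed
    show ?thesis unfolding cpair_def og[unfolded g_def] Ob_def[unfolded f_def] Mi[unfolded Ob_def f_def]
      using sm[unfolded Ob_def f_def] by simp
  qed
  have lw: "length w = n" "length w' = n - 1" using F(1) F'(1) by auto
  show ?thesis
  proof (rule set_eqI, rule iffI)
    fix x assume "x \<in> Cyc r w"
    then obtain i where i: "i \<in> {1..n}" "x = cpair r w i" unfolding Cyc_alt lw by auto
    show "x \<in> Cyc r w' \<union> (if c = n then {(n, col w n)} else {})"
    proof (cases "i = n")
      case False
      hence "i \<in> {1..n-1}" using i by auto
      thus ?thesis using same i unfolding Cyc_alt lw by auto
    next
      case True
      show ?thesis
      proof (cases "c = n")
        case True2: True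
        have fn: "f n = n" using c(2) True2 f_def by simp
        have "\<And>k. (f ^^ k) n = n" using fn by (rule funpow_fix)
        hence "orb f n = {n}" unfolding orb_def by auto
        hence "cpair r w n = (n, col w n)" unfolding cpair_def f_def using F(3)[OF nD] by simp
        thus ?thesis using True True2 i by simp
      next
        case False2: False
        have fnn: "f n \<noteq> n" using c(3)[OF nD] False2 f_def by auto
        have fn1: "f n \<in> {1..n-1}" using into[OF nD] fnn by auto
        have "orb f (f n) = orb f n" using orb_f[of "{1..n}" f n] inj into nD by simp
        hence "cpair r w n = cpair r w (f n)" unfolding cpair_def f_def by simp
        also have "\<dots> = cpair r w' (f n)" using same[OF fn1] by simp
        finally show ?thesis using True i fn1 unfolding Cyc_alt lw by auto
      qed
    qed
  next
    fix x assume x: "x \<in> Cyc r w' \<union> (if c = n then {(n, col w n)} else {})"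
    show "x \<in> Cyc r w"
    proof (cases "x \<in> Cyc r w'")
      case True
      then obtain i where i: "i \<in> {1..n-1}" "x = cpair r w' i" unfolding Cyc_alt lw by auto
      hence "x = cpair r w i" "i \<in> {1..n}" using same by auto
      thus ?thesis unfolding Cyc_alt lw by auto
    next
      case False
      hence cn: "c = n" "x = (n, col w n)" using x by (auto split: if_splits)
      have fn: "f n = n" using c(2) cn f_def by simp
      have "\<And>k. (f ^^ k) n = n" using fn by (rule funpow_fix)
      hence "orb f n = {n}" unfolding orb_def by auto
      hence "cpair r w n = (n, col w n)" unfolding cpair_def f_def using F(3)[OF nD] by simp
      thus ?thesis using cn nD unfolding Cyc_alt lw by force
    qed
  qed
qed

lemma Maxb_snoc: "Maxb (b @ [x]) = Maxb b \<union> (if fst x = Suc (length b) then {(Suc (length b), snd x)} else {})"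
proof (rule set_eqI, rule iffI)
  fix y assume "y \<in> Maxb (b @ [x])"
  then obtain i where i: "i \<in> {1..Suc (length b)}" "fst ((b @ [x]) ! (i - 1)) = i" "y = (i, snd ((b @ [x]) ! (i - 1)))"
    unfolding Maxb_def by auto
  show "y \<in> Maxb b \<union> (if fst x = Suc (length b) then {(Suc (length b), snd x)} else {})"
  proof (cases "i = Suc (length b)")
    case True thus ?thesis using i by (simp add: nth_append)
  next
    case False
    hence "i \<in> {1..length b}" "i - 1 < length b" using i by auto
    thus ?thesis using i unfolding Maxb_def by (auto simp: nth_append)
  qed
next
  fix y assume y: "y \<in> Maxb b \<union> (if fst x = Suc (length b) then {(Suc (length b), snd x)} else {})"
  show "y \<in> Maxb (b @ [x])"
  proof (cases "y \<in> Maxb b")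
    case True
    then obtain i where i: "i \<in> {1..length b}" "fst (b ! (i - 1)) = i" "y = (i, snd (b ! (i - 1)))"
      unfolding Maxb_def by auto
    hence "i - 1 < length b" by auto
    hence "fst ((b @ [x]) ! (i - 1)) = i" "y = (i, snd ((b @ [x]) ! (i - 1)))" "i \<in> {1..length (b @ [x])}"
      using i by (auto simp: nth_append)
    thus ?thesis unfolding Maxb_def by blast
  next
    case False
    hence "fst x = Suc (length b)" "y = (Suc (length b), snd x)" using y by (auto split: if_splits)
    thus ?thesis unfolding Maxb_def by (auto simp: nth_append intro!: exI[of _ "Suc (length b)"])
  qed
qed

lemma Minb_snoc: "Minb (b @ [x]) = Minb b \<union> (if fst x = 1 then {(Suc (length b), snd x)} else {})"
proof (rule set_eqI, rule iffI)
  fix y assume "y \<in> Minb (b @ [x])"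
  then obtain i where i: "i \<in> {1..Suc (length b)}" "fst ((b @ [x]) ! (i - 1)) = 1" "y = (i, snd ((b @ [x]) ! (i - 1)))"
    unfolding Minb_def by auto
  show "y \<in> Minb b \<union> (if fst x = 1 then {(Suc (length b), snd x)} else {})"
  proof (cases "i = Suc (length b)")
    case True thus ?thesis using i by (simp add: nth_append)
  next
    case False
    hence "i \<in> {1..length b}" "i - 1 < length b" using i by auto
    thus ?thesis using i unfolding Minb_def by (auto simp: nth_append)
  qed
next
  fix y assume y: "y \<in> Minb b \<union> (if fst x = 1 then {(Suc (length b), snd x)} else {})"
  show "y \<in> Minb (b @ [x])"
  proof (cases "y \<in> Minb b")
    case True
    then obtain i where i: "i \<in> {1..length b}" "fst (b ! (i - 1)) = 1" "y = (i, snd (b ! (i - 1)))"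
      unfolding Minb_def by auto
    hence "i - 1 < length b" by auto
    hence "fst ((b @ [x]) ! (i - 1)) = 1" "y = (i, snd ((b @ [x]) ! (i - 1)))" "i \<in> {1..length (b @ [x])}"
      using i by (auto simp: nth_append)
    thus ?thesis unfolding Minb_def by blast
  next
    case False
    hence "fst x = 1" "y = (Suc (length b), snd x)" using y by (auto split: if_splits)
    thus ?thesis unfolding Minb_def by (auto simp: nth_append intro!: exI[of _ "Suc (length b)"])
  qed
qed

lemma negset_Un: "negset r (A \<union> B) = negset r A \<union> negset r B"
  unfolding negset_def by (rule image_Un)

lemma negset_sing: "negset r {(a, e)} = {(a, neg r e)}"
  unfolding negset_def by simp

lemma negset_empty: "negset r {} = {}"
  unfolding negset_def by simp

lemma neg_e: "z < r \<Longrightarrow> neg r ((r - z) mod r) = z"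
  using neg_neg[of z r] by (simp add: neg_def)

theorem Cyc_thm:
  assumes "in_G r n w" "r \<ge> 1"
  shows "Cyc r w = negset r (Maxb (bcode r w))"
  using assms
proof (induction n arbitrary: w)
  case 0
  hence "w = []" using in_G_facts(1)[OF 0(1)] by simp
  thus ?case by (simp add: Cyc_alt bcode_def Maxb_def negset_def)
next
  case (Suc m)
  have n1: "1 \<le> Suc m" by simp
  obtain c w' where c: "c \<in> {1..Suc m}" "sig w c = Suc m" "\<And>i. i\<in>{1..Suc m} \<Longrightarrow> sig w i = Suc m \<Longrightarrow> i = c"
    and G': "in_G r (Suc m-1) w'" and B: "bcode r w = bcode r w' @ [(c, (r - col w c) mod r)]"
    and S: "\<And>i. i\<in>{1..Suc m-1} \<Longrightarrow> sig w' i = (if i = c then sig w (Suc m) else sig w i)"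
    and C: "\<And>i. i\<in>{1..Suc m-1} \<Longrightarrow> col w' i = (if i = c then (col w c + col w (Suc m)) mod r else col w i)"
    using step[OF Suc.prems(1) n1 Suc.prems(2)] by blast
  have G'': "in_G r m w'" using G' by simp
  have IH: "Cyc r w' = negset r (Maxb (bcode r w'))" using Suc.IH[OF G'' Suc.prems(2)] .
  have lb: "length (bcode r w') = m" using length_bcode in_G_facts(1)[OF G''] by simp
  have cs: "Cyc r w = Cyc r w' \<union> (if c = Suc m then {(Suc m, col w (Suc m))} else {})"
    using Cyc_step[OF Suc.prems(1) n1 Suc.prems(2) c G' S C] .
  have cr: "col w c < r" using in_G_facts(3)[OF Suc.prems(1) c(1)] .
  show ?case unfolding cs B Maxb_snoc lb IH
    using neg_e[OF cr] by (auto simp: negset_Un negset_sing negset_empty)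
qed



definition Rec :: "('a \<Rightarrow> 'a) \<Rightarrow> ('a \<Rightarrow> nat) \<Rightarrow> 'a \<Rightarrow> 'a set" where
  "Rec A g x0 = {(A ^^ k) x0 | k. k \<ge> 1 \<and> (\<forall>y \<in> (\<lambda>j. (A ^^ j) x0) ` {1..<k}. g ((A ^^ k) x0) < g y)}"

lemma img_Suc: "k \<ge> 1 \<Longrightarrow> s ` {1..<Suc k} = s ` {1..<k} \<union> {s k}"
proof -
  assume "k \<ge> 1"
  hence "{1..<Suc k} = insert k {1..<k}" by auto
  thus ?thesis by simp
qed

lemma rec_splice:
  fixes A A' :: "'a \<Rightarrow> 'a" and g :: "'a \<Rightarrow> nat"
  assumes x0: "x0 \<in> S" "g x0 \<noteq> n"
    and H1: "\<And>y. y \<in> S \<Longrightarrow> A y \<in> S"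
    and H2: "\<And>y. y \<in> S \<Longrightarrow> g y \<noteq> n \<Longrightarrow> A' y = (if g (A y) = n then A (A y) else A y)"
    and H3: "\<And>y. y \<in> S \<Longrightarrow> g y \<noteq> n \<Longrightarrow> g (A y) = n \<Longrightarrow> g (A (A y)) \<noteq> n"
    and H4: "\<And>y. y \<in> S \<Longrightarrow> g y \<le> n"
  shows "Rec A g x0 = Rec A' g x0 \<union> (if g (A x0) = n then {A x0} else {})"
proof -
  define s where "s k = (A ^^ k) x0" for k
  define t where "t k = (A' ^^ k) x0" for k
  define P where "P k = s ` {1..<k}" for k
  define Q where "Q k = t ` {1..<k}" for k
  define N where "N = {y. g y = n}"
  have sS: "s k \<in> S" for k unfolding s_def using funpow_in[of S A, OF H1 x0(1)] by blast
  have sSuc: "s (Suc k) = A (s k)" for k unfolding s_def by simp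
  have tSuc: "t (Suc k) = A' (t k)" for k unfolding t_def by simp
  have tS: "t k \<in> S \<and> g (t k) \<noteq> n" for k
  proof (induction k)
    case 0 thus ?case using x0 t_def by simp
  next
    case (Suc k)
    show ?case
    proof (cases "g (A (t k)) = n")
      case True
      hence "t (Suc k) = A (A (t k))" using H2 Suc tSuc by simp
      thus ?thesis using H1 H3 Suc True by simp
    next
      case False
      hence "t (Suc k) = A (t k)" using H2 Suc tSuc by simp
      thus ?thesis using H1 Suc False by simp
    qed
  qed
  have PSuc: "P (Suc k) = P k \<union> {s k}" if "k \<ge> 1" for k using img_Suc[OF that] P_def by simp
  have QSuc: "Q (Suc k) = Q k \<union> {t k}" if "k \<ge> 1" for k using img_Suc[OF that] Q_def by simp
  have P1: "P 1 = {}" "Q 1 = {}" unfolding P_def Q_def by auto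
  have "{1..<(2::nat)} = {1}" by auto
  hence P2: "P 2 = {s 1}" unfolding P_def by simp
  have one: "(g (s (Suc k)) \<noteq> n \<and> t (Suc k') = s (Suc k)) \<or> (g (s (Suc k)) = n \<and> t (Suc k') = s (Suc (Suc k)))"
    if "t k' = s k" for k k'
  proof -
    have "t (Suc k') = A' (s k)" using tSuc that by simp
    moreover have "s k \<in> S" "g (s k) \<noteq> n" using sS tS that by metis+
    ultimately have "t (Suc k') = (if g (s (Suc k)) = n then s (Suc (Suc k)) else s (Suc k))"
      using H2 sSuc by simp
    thus ?thesis by auto
  qed
  have stepL: "((\<exists>k'\<ge>1. t k' = s (Suc k) \<and> Q k' = P (Suc k) - N) \<or>
       (g (s (Suc k)) = n \<and> (\<exists>k'\<ge>1. t k' = s (Suc (Suc k)) \<and> Q k' = P (Suc (Suc k)) - N)))"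
    if "k' \<ge> 1" "k \<ge> 1" "t k' = s k" "Q k' = P k - N" for k k'
  proof -
    have gs: "g (s k) \<noteq> n" using tS that(3) by metis
    have Q': "Q (Suc k') = (P k - N) \<union> {s k}" using QSuc[OF that(1)] that(3,4) by simp
    show ?thesis
    proof (cases "g (s (Suc k)) = n")
      case False
      hence "t (Suc k') = s (Suc k)" using one[OF that(3)] by auto
      moreover have "Q (Suc k') = P (Suc k) - N" using Q' PSuc[OF that(2)] gs N_def by auto
      ultimately show ?thesis by (intro disjI1 exI[of _ "Suc k'"]) simp
    next
      case True
      hence "t (Suc k') = s (Suc (Suc k))" using one[OF that(3)] by auto
      moreover have "P (Suc (Suc k)) = P k \<union> {s k} \<union> {s (Suc k)}" using PSuc that(2) by simp
      hence "Q (Suc k') = P (Suc (Suc k)) - N" using Q' gs True N_def by auto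
      ultimately show ?thesis using True by (intro disjI2) auto
    qed
  qed
  have base0: "(\<exists>k'\<ge>1. t k' = s 1 \<and> Q k' = P 1 - N) \<or>
       (g (s 1) = n \<and> (\<exists>k'\<ge>1. t k' = s 2 \<and> Q k' = P 2 - N))"
  proof -
    have "t 0 = s 0" unfolding s_def t_def by simp
    hence o: "(g (s 1) \<noteq> n \<and> t 1 = s 1) \<or> (g (s 1) = n \<and> t 1 = s 2)" using one[of 0 0]
      by (simp add: numeral_2_eq_2)
    show ?thesis
    proof (cases "g (s 1) = n")
      case False thus ?thesis using o P1 by (intro disjI1 exI[of _ 1]) auto
    next
      case True thus ?thesis using o P1 P2 N_def by (intro disjI2) auto
    qed
  qed
  have Gk: "(\<exists>k'\<ge>1. t k' = s k \<and> Q k' = P k - N) \<or>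
       (g (s k) = n \<and> (\<exists>k'\<ge>1. t k' = s (Suc k) \<and> Q k' = P (Suc k) - N))" if "k \<ge> 1" for k
    using that
  proof (induction k rule: nat_induct_at_least)
    case base thus ?case using base0 by (simp add: numeral_2_eq_2)
  next
    case (Suc k)
    from Suc.IH show ?case
    proof
      assume "\<exists>k'\<ge>1. t k' = s k \<and> Q k' = P k - N"
      then obtain k' where "k' \<ge> 1" "t k' = s k" "Q k' = P k - N" by auto
      thus ?case using stepL[of k' k] Suc.hyps by auto
    next
      assume "g (s k) = n \<and> (\<exists>k'\<ge>1. t k' = s (Suc k) \<and> Q k' = P (Suc k) - N)"
      thus ?case by auto
    qed
  qed
  have Fk: "\<exists>k\<ge>1. t k' = s k \<and> Q k' = P k - N" if "k' \<ge> 1" for k'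
    using that
  proof (induction k' rule: nat_induct_at_least)
    case base
    have "t 0 = s 0" unfolding s_def t_def by simp
    hence o: "(g (s 1) \<noteq> n \<and> t 1 = s 1) \<or> (g (s 1) = n \<and> t 1 = s 2)" using one[of 0 0]
      by (simp add: numeral_2_eq_2)
    show ?case
    proof (cases "g (s 1) = n")
      case False thus ?thesis using o P1 by (intro exI[of _ 1]) auto
    next
      case True thus ?thesis using o P1 P2 N_def by (intro exI[of _ 2]) auto
    qed
  next
    case (Suc k')
    then obtain k where k: "k \<ge> 1" "t k' = s k" "Q k' = P k - N" by auto
    have gs: "g (s k) \<noteq> n" using tS k(2) by metis
    have Q': "Q (Suc k') = (P k - N) \<union> {s k}" using QSuc[OF Suc.hyps] k by simp
    show ?case
    proof (cases "g (s (Suc k)) = n")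
      case False
      hence "t (Suc k') = s (Suc k)" using one[OF k(2)] by auto
      moreover have "Q (Suc k') = P (Suc k) - N" using Q' PSuc[OF k(1)] gs N_def by auto
      ultimately show ?thesis by (intro exI[of _ "Suc k"]) simp
    next
      case True
      hence "t (Suc k') = s (Suc (Suc k))" using one[OF k(2)] by auto
      moreover have "P (Suc (Suc k)) = P k \<union> {s k} \<union> {s (Suc k)}" using PSuc k(1) by simp
      hence "Q (Suc k') = P (Suc (Suc k)) - N" using Q' gs True N_def by auto
      ultimately show ?thesis by (intro exI[of _ "Suc (Suc k)"]) simp
    qed
  qed
  have RA: "Rec A g x0 = {s k | k. k \<ge> 1 \<and> (\<forall>y\<in>P k. g (s k) < g y)}"
    unfolding Rec_def s_def P_def ..
  have RA': "Rec A' g x0 = {t k | k. k \<ge> 1 \<and> (\<forall>y\<in>Q k. g (t k) < g y)}"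
    unfolding Rec_def t_def Q_def ..
  have s1: "s 1 = A x0" unfolding s_def by simp
  show ?thesis
  proof (rule set_eqI, rule iffI)
    fix x assume "x \<in> Rec A g x0"
    then obtain k where k: "k \<ge> 1" "\<forall>y\<in>P k. g (s k) < g y" "x = s k" unfolding RA by auto
    show "x \<in> Rec A' g x0 \<union> (if g (A x0) = n then {A x0} else {})"
    proof (cases "g (s k) = n")
      case True
      have "k = 1"
      proof (rule ccontr)
        assume "k \<noteq> 1"
        hence "s 1 \<in> P k" using k(1) unfolding P_def by auto
        hence "n < g (s 1)" using k(2) True by auto
        thus False using H4[OF sS[of 1]] by simp
      qed
      thus ?thesis using True k(3) s1 by simp
    next
      case False
      then obtain k' where k': "k' \<ge> 1" "t k' = s k" "Q k' = P k - N" using Gk[OF k(1)] by auto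
      hence "\<forall>y\<in>Q k'. g (t k') < g y" using k(2) by auto
      hence "x = t k' \<and> k' \<ge> 1 \<and> (\<forall>y\<in>Q k'. g (t k') < g y)" using k' k(3) by simp
      hence "x \<in> Rec A' g x0" unfolding RA' by blast
      thus ?thesis by simp
    qed
  next
    fix x assume x: "x \<in> Rec A' g x0 \<union> (if g (A x0) = n then {A x0} else {})"
    show "x \<in> Rec A g x0"
    proof (cases "x \<in> Rec A' g x0")
      case True
      then obtain k' where k': "k' \<ge> 1" "\<forall>y\<in>Q k'. g (t k') < g y" "x = t k'" unfolding RA' by auto
      then obtain k where k: "k \<ge> 1" "t k' = s k" "Q k' = P k - N" using Fk by blast
      have gs: "g (s k) < n" using tS[of k'] H4[OF sS[of k]] k(2) by (metis le_neq_implies_less)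
      have "\<forall>y\<in>P k. g (s k) < g y"
      proof
        fix y assume y: "y \<in> P k"
        show "g (s k) < g y"
        proof (cases "g y = n")
          case True thus ?thesis using gs by simp
        next
          case False
          hence "y \<in> Q k'" using y k(3) N_def by auto
          thus ?thesis using k'(2) k(2) by simp
        qed
      qed
      thus ?thesis unfolding RA using k k'(3) by auto
    next
      case False
      hence "x = s 1" using x s1 by (auto split: if_splits)
      moreover have "\<forall>y\<in>P 1. g (s 1) < g y" using P1 by simp
      ultimately show ?thesis unfolding RA by auto
    qed
  qed
qed



lemma mod_cancel_lt:
  assumes "(a + t) mod r = (a + t') mod (r::nat)" "t < r" "t' < r"
  shows "t = t'"
proof -
  have *: "x = y" if "(a + x) mod r = (a + y) mod r" "x < r" "y < r" "x \<le> y" for x y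
  proof -
    have "r dvd (a + y) - (a + x)" using mod_eq_dvd_iff_nat[of "a + x" "a + y" r] that by simp
    hence "r dvd y - x" by simp
    moreover have "y - x < r" using that by simp
    ultimately have "y - x = 0" using nat_dvd_not_less by (metis neq0_conv)
    thus "x = y" using that(4) by simp
  qed
  show ?thesis
  proof (cases "t \<le> t'")
    case True thus ?thesis using * assms by blast
  next
    case False thus ?thesis using *[of t' t] assms by simp
  qed
qed

lemma act_props:
  assumes G: "in_G r n w" and r: "r \<ge> 1"
  shows "\<And>y. y \<in> {1..n} \<times> {..<r} \<Longrightarrow> act r w y \<in> {1..n} \<times> {..<r}"
    "inj_on (act r w) ({1..n} \<times> {..<r})"
proof -
  note F = in_G_facts[OF G]
  show "\<And>y. y \<in> {1..n} \<times> {..<r} \<Longrightarrow> act r w y \<in> {1..n} \<times> {..<r}"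
    using F(2) r by (auto simp: act_def)
  show "inj_on (act r w) ({1..n} \<times> {..<r})"
  proof
    fix x y assume x: "x \<in> {1..n} \<times> {..<r}" and y: "y \<in> {1..n} \<times> {..<r}" and e: "act r w x = act r w y"
    have "sig w (fst x) = sig w (fst y)" using e by (simp add: act_def)
    hence f: "fst x = fst y" using F(4) x y by (auto simp: inj_on_eq_iff)
    have "(col w (fst x) + snd x) mod r = (col w (fst x) + snd y) mod r" using e f by (simp add: act_def)
    moreover have "snd x < r" "snd y < r" using x y by auto
    ultimately have "snd x = snd y" by (rule mod_cancel_lt)
    thus "x = y" using f by (simp add: prod_eq_iff)
  qed
qed

lemma Lmic_rec:
  assumes G: "in_G r n w" and n: "n \<ge> 1" and r: "r \<ge> 1"
  shows "Lmic r w = Rec (act r w) fst (1, 0)"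
proof -
  define A where "A = act r w"
  define S where "S = {1..n} \<times> {..<r}"
  have into: "\<And>y. y \<in> S \<Longrightarrow> A y \<in> S" using act_props(1)[OF G r] A_def S_def by simp
  have inj: "inj_on A S" using act_props(2)[OF G r] A_def S_def by simp
  have fin: "finite S" unfolding S_def by simp
  have x0: "(1, 0) \<in> S" unfolding S_def using n r by simp
  define s where "s k = (A ^^ k) (1, 0)" for k
  have sS: "s k \<in> S" for k unfolding s_def using funpow_in[of S A, OF into x0] by blast
  obtain k0 where k0: "k0 > 0" "(A ^^ k0) (1, 0) = (1, 0)" using return[OF fin inj into x0] by blast
  define M where "M = (LEAST m. m \<ge> 1 \<and> (A ^^ m) (1, 0) = (1, 0))"
  have M: "M \<ge> 1" "s M = (1, 0)"
    using LeastI[of "\<lambda>m. m \<ge> 1 \<and> (A ^^ m) (1, 0) = (1, 0)" k0] k0 M_def s_def by auto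
  define u where "u = map s [1..<Suc M]"
  have Lu: "Lmic r w = Lmil u" unfolding Lmic_def Let_def A_def[symmetric] M_def[symmetric] u_def s_def ..
  have lu: "length u = M" unfolding u_def by simp
  have un: "\<And>q. q < M \<Longrightarrow> u ! q = s (Suc q)"
  proof -
    fix q assume q: "q < M"
    have "u ! q = s ([1..<Suc M] ! q)" unfolding u_def using q by (simp del: upt_Suc)
    also have "[1..<Suc M] ! q = Suc q" using q by (simp del: upt_Suc add: nth_upt)
    finally show "u ! q = s (Suc q)" .
  qed
  have Rr: "Rec A fst (1, 0) = {s k | k. k \<ge> 1 \<and> (\<forall>y \<in> s ` {1..<k}. fst (s k) < fst y)}"
    unfolding Rec_def s_def ..
  have "Lmil u = Rec A fst (1, 0)"
  proof (rule set_eqI, rule iffI)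
    fix x assume "x \<in> Lmil u"
    then obtain q where q: "q < M" "x = u ! q" "\<forall>q'<q. fst (u ! q) < fst (u ! q')"
      unfolding Lmil_def lu by auto
    have "\<forall>y \<in> s ` {1..<Suc q}. fst (s (Suc q)) < fst y"
    proof
      fix y assume "y \<in> s ` {1..<Suc q}"
      then obtain j where j: "j \<in> {1..<Suc q}" "y = s j" by auto
      hence "j - 1 < q" "Suc (j - 1) = j" by auto
      thus "fst (s (Suc q)) < fst y" using q(3) un q(1) j(2) by (metis less_trans)
    qed
    moreover have "x = s (Suc q)" using q un by simp
    ultimately show "x \<in> Rec A fst (1, 0)" unfolding Rr by (intro CollectI exI[of _ "Suc q"]) simp
  next
    fix x assume "x \<in> Rec A fst (1, 0)"
    then obtain k where k: "k \<ge> 1" "\<forall>y \<in> s ` {1..<k}. fst (s k) < fst y" "x = s k" unfolding Rr by auto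
    have kM: "k \<le> M"
    proof (rule ccontr)
      assume "\<not> k \<le> M"
      hence "s M \<in> s ` {1..<k}" using M(1) by auto
      hence "fst (s k) < fst (s M)" using k(2) by blast
      hence "fst (s k) < 1" using M(2) by simp
      moreover have "fst (s k) \<ge> 1" using sS[of k] unfolding S_def by auto
      ultimately show False by simp
    qed
    define q where "q = k - 1"
    have q: "q < M" "Suc q = k" using kM k(1) q_def by auto
    have "\<forall>q'<q. fst (u ! q) < fst (u ! q')"
    proof (intro allI impI)
      fix q' assume "q' < q"
      hence "s (Suc q') \<in> s ` {1..<k}" using q by auto
      thus "fst (u ! q) < fst (u ! q')" using k(2) un q \<open>q' < q\<close> by simp
    qed
    moreover have "x = u ! q" using un q k(3) by simp
    ultimately show "x \<in> Lmil u" unfolding Lmil_def lu using q(1) by blast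
  qed
  thus ?thesis using Lu A_def by simp
qed

lemma Lmic_thm:
  assumes "in_G r n w" "n \<ge> 1" "r \<ge> 1"
  shows "Lmic r w = negset r (Minb (bcode r w))"
  using assms(2) assms(1,3)
proof (induction n arbitrary: w rule: nat_induct_at_least)
  case base
  obtain c w' where c: "c \<in> {1..1}" "sig w c = 1"
    and G': "in_G r (1-1) w'" and B: "bcode r w = bcode r w' @ [(c, (r - col w c) mod r)]"
    using step[OF base(1) _ base(2)] by auto
  have c1: "c = 1" using c(1) by simp
  have "length w' = 0" using in_G_facts(1)[OF G'] by simp
  hence b: "bcode r w = [(1, (r - col w 1) mod r)]" using B c1 by (simp add: bcode_def)
  have cr: "col w 1 < r" using in_G_facts(3)[OF base(1)] by simp
  have R: "negset r (Minb (bcode r w)) = {(1, col w 1)}"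
    unfolding b using Minb_snoc[of "[]" "(1, (r - col w 1) mod r)"] neg_e[OF cr]
    by (simp add: Minb_def negset_def)
  define A where "A = act r w"
  define S where "S = {1..1::nat} \<times> {..<r}"
  have into: "\<And>y. y \<in> S \<Longrightarrow> A y \<in> S" using act_props(1)[OF base(1) base(2)] A_def S_def by simp
  have x0: "(1, 0) \<in> S" unfolding S_def using base(2) by simp
  have sS: "(A ^^ k) (1, 0) \<in> S" for k using funpow_in[of S A, OF into x0] by blast
  have f1: "fst ((A ^^ k) (1, 0)) = 1" for k using sS[of k] unfolding S_def by auto
  have A1: "A (1, 0) = (1, col w 1)" unfolding A_def act_def using c c1 cr by simp
  have "Rec A fst (1, 0) = {A (1, 0)}"
  proof (rule set_eqI, rule iffI)
    fix x assume "x \<in> Rec A fst (1, 0)"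
    then obtain k where k: "k \<ge> 1" "\<forall>y \<in> (\<lambda>j. (A ^^ j) (1, 0)) ` {1..<k}. fst ((A ^^ k) (1, 0)) < fst y"
      "x = (A ^^ k) (1, 0)" unfolding Rec_def by auto
    have "k = 1"
    proof (rule ccontr)
      assume "k \<noteq> 1"
      hence "1 \<in> {1..<k}" using k(1) by auto
      hence "(A ^^ 1) (1, 0) \<in> (\<lambda>j. (A ^^ j) (1, 0)) ` {1..<k}" by (rule imageI)
      hence "fst ((A ^^ k) (1, 0)) < fst ((A ^^ 1) (1, 0))" using k(2) by blast
      thus False using f1[of k] f1[of 1] by simp
    qed
    thus "x \<in> {A (1, 0)}" using k(3) by simp
  next
    fix x assume "x \<in> {A (1, 0)}"
    hence "x = (A ^^ 1) (1, 0) \<and> (1::nat) \<ge> 1 \<and> (\<forall>y \<in> (\<lambda>j. (A ^^ j) (1, 0)) ` {1..<1}. fst ((A ^^ 1) (1, 0)) < fst y)"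
      by simp
    thus "x \<in> Rec A fst (1, 0)" unfolding Rec_def by blast
  qed
  hence "Lmic r w = {(1, col w 1)}" using Lmic_rec[OF base(1) _ base(2)] A1 A_def by simp
  thus ?case using R by simp
next
  case (Suc m)
  let ?n = "Suc m"
  have n1: "1 \<le> Suc m" by simp
  obtain c w' where c: "c \<in> {1..?n}" "sig w c = ?n" "\<And>i. i\<in>{1..?n} \<Longrightarrow> sig w i = ?n \<Longrightarrow> i = c"
    and G': "in_G r (?n-1) w'" and B: "bcode r w = bcode r w' @ [(c, (r - col w c) mod r)]"
    and S: "\<And>i. i\<in>{1..?n-1} \<Longrightarrow> sig w' i = (if i = c then sig w ?n else sig w i)"
    and C: "\<And>i. i\<in>{1..?n-1} \<Longrightarrow> col w' i = (if i = c then (col w c + col w ?n) mod r else col w i)"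
    using step[OF Suc.prems(1) n1 Suc.prems(2)] by blast
  have G'': "in_G r m w'" using G' by simp
  have IH: "Lmic r w' = negset r (Minb (bcode r w'))" using Suc.IH[OF G'' Suc.prems(2)] .
  note F = in_G_facts[OF Suc.prems(1)]
  have lb: "length (bcode r w') = m" using length_bcode in_G_facts(1)[OF G''] by simp
  define A where "A = act r w"
  define A' where "A' = act r w'"
  define SS where "SS = {y::cletter. fst y \<in> {1..?n}}"
  have nD: "?n \<in> {1..?n}" by simp
  have H1: "\<And>y. y \<in> SS \<Longrightarrow> A y \<in> SS" using F(2) unfolding SS_def A_def act_def by auto
  have H4: "\<And>y. y \<in> SS \<Longrightarrow> fst y \<le> ?n" unfolding SS_def by auto
  have H3: "\<And>y. y \<in> SS \<Longrightarrow> fst y \<noteq> ?n \<Longrightarrow> fst (A y) = ?n \<Longrightarrow> fst (A (A y)) \<noteq> ?n"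
  proof -
    fix y :: cletter assume y: "y \<in> SS" "fst y \<noteq> ?n" "fst (A y) = ?n"
    have "sig w (fst y) = ?n" using y(3) unfolding A_def act_def by simp
    hence "fst y = c" using c(3) y(1) unfolding SS_def by simp
    hence cn: "c \<noteq> ?n" using y(2) by simp
    have "sig w ?n \<noteq> ?n" using c(3)[OF nD] cn by auto
    thus "fst (A (A y)) \<noteq> ?n" using y(3) unfolding A_def act_def by simp
  qed
  have H2: "\<And>y. y \<in> SS \<Longrightarrow> fst y \<noteq> ?n \<Longrightarrow> A' y = (if fst (A y) = ?n then A (A y) else A y)"
  proof -
    fix y :: cletter assume y: "y \<in> SS" "fst y \<noteq> ?n"
    obtain i t where it: "y = (i, t)" by (cases y)
    have i: "i \<in> {1..?n-1}" using y it unfolding SS_def by auto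
    show "A' y = (if fst (A y) = ?n then A (A y) else A y)"
    proof (cases "i = c")
      case True
      have "fst (A y) = ?n" using True c(2) it unfolding A_def act_def by simp
      moreover have "A' y = A (A y)"
      proof -
        have "A' y = (sig w ?n, ((col w c + col w ?n) mod r + t) mod r)"
          using S[OF i] C[OF i] True it unfolding A'_def act_def by simp
        moreover have "A (A y) = (sig w ?n, (col w ?n + (col w c + t) mod r) mod r)"
          using True c(2) it unfolding A_def act_def by simp
        moreover have "((col w c + col w ?n) mod r + t) mod r = (col w ?n + (col w c + t) mod r) mod r"
          by (simp add: mod_add_left_eq mod_add_right_eq ac_simps)
        ultimately show ?thesis by simp
      qed
      ultimately show ?thesis by simp
    next
      case False
      have "sig w i \<noteq> ?n" using c(3) i False by auto
      hence "fst (A y) \<noteq> ?n" using it unfolding A_def act_def by simp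
      moreover have "A' y = A y" using S[OF i] C[OF i] False it unfolding A'_def A_def act_def by simp
      ultimately show ?thesis by simp
    qed
  qed
  have x0: "(1, 0) \<in> SS" "fst (1::nat, 0::nat) \<noteq> ?n" using Suc.hyps unfolding SS_def by auto
  have RS: "Rec A fst (1, 0) = Rec A' fst (1, 0) \<union> (if fst (A (1, 0)) = ?n then {A (1, 0)} else {})"
    by (rule rec_splice[OF x0 H1 H2 H3 H4])
  have cr: "col w 1 < r" using F(3)[of 1] by simp
  have A10: "A (1, 0) = (sig w 1, col w 1)" unfolding A_def act_def using cr by simp
  have c1: "(c = 1) = (sig w 1 = ?n)" using c(2) c(3)[of 1] by auto
  have ccr: "col w c < r" using F(3)[OF c(1)] .
  have "Lmic r w = Lmic r w' \<union> (if sig w 1 = ?n then {(?n, col w 1)} else {})"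
    using Lmic_rec[OF Suc.prems(1) n1 Suc.prems(2)] Lmic_rec[OF G'' _ Suc.prems(2)] Suc.hyps RS A10
    unfolding A_def A'_def by auto
  also have "\<dots> = negset r (Minb (bcode r w))"
    unfolding IH B Minb_snoc lb using c1 neg_e[OF ccr]
    by (auto simp: negset_Un negset_sing negset_empty)
  finally show ?case .
qed



lemma bcode_aux_col: "r \<ge> 1 \<Longrightarrow> \<forall>x\<in>set (bcode_aux r j w). snd x < r"
  by (induction j arbitrary: w) (auto simp: Let_def)

lemma bnth_col:
  assumes "r \<ge> 1" "i \<in> {1..length (bcode r w)}"
  shows "snd (bcode r w ! (i - 1)) < r"
proof -
  have "bcode r w ! (i - 1) \<in> set (bcode r w)" using assms(2) by auto
  thus ?thesis using bcode_aux_col[OF assms(1)] unfolding bcode_def by blast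
qed

theorem lemma3p4:
  fixes r n :: nat and w :: "cletter list"
  assumes "r \<ge> 1" and "n \<ge> 1" and "in_G r n w"
  defines "b \<equiv> bcode r w"
  shows "colpart (Cyc r w) 0 = colpart (Maxb b) 0
       \<and> colpart (Lmic r w) 0 = colpart (Minb b) 0
       \<and> colpart (Lmap w) 0 = colpart (Rmil b) 0
       \<and> colpart (Lmal w) 0 = colpart (Rmip b) 0
       \<and> (\<forall>t. 1 \<le> t \<and> t \<le> r - 1 \<longrightarrow>
            colpart (Cyc r w) t = colpart (Maxb b) (r - t)
          \<and> colpart (Lmic r w) t = colpart (Minb b) (r - t)
          \<and> colpart (Lmap w) t = colpart (Rmil b) (r - t)
          \<and> colpart (Lmal w) t = colpart (Rmip b) (r - t))"
proof -
  have e1: "Cyc r w = negset r (Maxb b)" using Cyc_thm[OF assms(3,1)] b_def by simp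
  have e2: "Lmic r w = negset r (Minb b)" using Lmic_thm[OF assms(3,2,1)] b_def by simp
  have e3: "Lmap w = negset r (Rmil b)" using Lmap_thm[OF assms(3,1)] b_def by simp
  have e4: "Lmal w = negset r (Rmip b)" using Lmal_thm[OF assms(3,1)] b_def by simp
  have bc: "\<And>i. i \<in> {1..length b} \<Longrightarrow> snd (b ! (i - 1)) < r" using bnth_col[OF assms(1)] b_def by simp
  have c1: "\<forall>x\<in>Maxb b. snd x < r" unfolding Maxb_def using bc by auto
  have c2: "\<forall>x\<in>Minb b. snd x < r" unfolding Minb_def using bc by auto
  have c3: "\<forall>x\<in>Rmil b. snd x < r"
  proof
    fix x assume "x \<in> Rmil b"
    then obtain i where "i \<in> {1..length b}" "x = b ! (i - 1)" unfolding Rmil_def by auto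
    thus "snd x < r" using bc by simp
  qed
  have c4: "\<forall>x\<in>Rmip b. snd x < r" unfolding Rmip_def using bc by auto
  note p1 = colpart_negset[OF c1 assms(1)]
  note p2 = colpart_negset[OF c2 assms(1)]
  note p3 = colpart_negset[OF c3 assms(1)]
  note p4 = colpart_negset[OF c4 assms(1)]
  show ?thesis unfolding e1 e2 e3 e4 using p1 p2 p3 p4 by simp
qed

end
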